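(* For any integer $g\ge 0$, \[\sum_{S\in\mathcal{B}(g)}t_2(S)\le F_{g+4},\] where $F_n$ is the $n$-th Fibonacci number ($F_1=F_2=1$, $F_{n+2}=F_{n+1}+F_n$).
   Context: A numerical semigroup $S$ is a submonoid of $\mathbb{N}_0$ with finite complement $\mathcal{H}(S)$; its genus is $|\mathcal{H}(S)|$, $m=m(S)$ its smallest nonzero element and $F=F(S)=\max\mathcal{H}(S)$. The type $t(S)$ is the number of $P\in\mathcal{H}(S)$ with $P+s\in S$ for all $s\in S\setminus\{0\}$. Define $t_1(S)=\#(\mathcal{H}(S)\cap[F-m+1,F])$ and $t_2(S)=t(S)-t_1(S)$. $\mathcal{B}(g)$ is the set of numerical semigroups $S$ of genus $g$ with $F(S)<2m(S)$. *)

theory Defs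
  imports Main "HOL-Number_Theory.Fib"
begin

definition numerical_semigroup :: "nat set \<Rightarrow> bool" where
  "numerical_semigroup S \<longleftrightarrow> 0 \<in> S \<and> (\<forall>a\<in>S. \<forall>b\<in>S. a + b \<in> S) \<and> finite (UNIV - S)"

definition gaps :: "nat set \<Rightarrow> nat set" where
  "gaps S = UNIV - S"

definition genus :: "nat set \<Rightarrow> nat" where
  "genus S = card (gaps S)"

definition multiplicity_ns :: "nat set \<Rightarrow> nat" where
  "multiplicity_ns S = (LEAST s. s \<in> S \<and> s \<noteq> 0)"

definition frobenius :: "nat set \<Rightarrow> int" where
  "frobenius S = (if gaps S = {} then -1 else int (Max (gaps S)))"

definition pseudo_frobenius :: "nat set \<Rightarrow> nat set" where
  "pseudo_frobenius S = {P \<in> gaps S. \<forall>s\<in>S. s \<noteq> 0 \<longrightarrow> P + s \<in> S}"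

definition type_ns :: "nat set \<Rightarrow> nat" where
  "type_ns S = card (pseudo_frobenius S)"

definition t1 :: "nat set \<Rightarrow> nat" where
  "t1 S = card {h \<in> gaps S. frobenius S - int (multiplicity_ns S) + 1 \<le> int h \<and> int h \<le> frobenius S}"

definition t2 :: "nat set \<Rightarrow> int" where
  "t2 S = int (type_ns S) - int (t1 S)"

definition B_set :: "nat \<Rightarrow> nat set set" where
  "B_set g = {S. numerical_semigroup S \<and> genus S = g \<and> frobenius S < 2 * int (multiplicity_ns S)}"

end

theory Submission
  imports Defs "HOL-Number_Theory.Fib"
begin


definition wb :: "bool \<Rightarrow> nat" where "wb x = (if x then 1 else 2)"
definition wt :: "bool list \<Rightarrow> nat" where "wt xs = sum_list (map wb xs)"

lemma wt_simps[simp]: "wt [] = 0" "wt (x # xs) = wb x + wt xs" "wt (xs @ ys) = wt xs + wt ys"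
  by (auto simp: wt_def)

lemma wt_ge_len: "length xs \<le> wt xs"
  by (induction xs) (auto simp: wb_def)

lemma fin_wt: "finite {xs. wt xs \<le> K}"
proof -
  have "{xs. wt xs \<le> K} \<subseteq> {xs. set xs \<subseteq> UNIV \<and> length xs \<le> K}"
    using wt_ge_len order_trans by blast
  moreover have "finite {xs::bool list. set xs \<subseteq> UNIV \<and> length xs \<le> K}"
    by (rule finite_lists_length_le) simp
  ultimately show ?thesis by (rule finite_subset)
qed

lemma cons_img: "(x # ys \<in> Cons z ` A) \<longleftrightarrow> x = z \<and> ys \<in> A" by auto

lemma wt_rec: "{xs. wt xs \<le> Suc (Suc K)} = insert [] (Cons True ` {xs. wt xs \<le> Suc K} \<union> Cons False ` {xs. wt xs \<le> K})"
proof (rule set_eqI)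
  fix xs show "xs \<in> {xs. wt xs \<le> Suc (Suc K)} \<longleftrightarrow> xs \<in> insert [] (Cons True ` {xs. wt xs \<le> Suc K} \<union> Cons False ` {xs. wt xs \<le> K})"
  proof (cases xs)
    case (Cons x ys)
    then show ?thesis by (cases x) (simp_all add: cons_img wb_def)
  qed simp
qed

lemma card_wt: "card {xs. wt xs \<le> K} + 1 = fib (K + 3)"
proof (induction K rule: fib.induct)
  case 1
  have "{xs. wt xs \<le> 0} = {[]}" 
  proof (rule set_eqI)
    fix xs show "xs \<in> {xs. wt xs \<le> 0} \<longleftrightarrow> xs \<in> {[]}" by (cases xs) (auto simp: wb_def)
  qed
  then show ?case by (simp add: numeral_eq_Suc)
next
  case 2
  have "{xs. wt xs \<le> Suc 0} = {[], [True]}"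
  proof (rule set_eqI)
    fix xs show "xs \<in> {xs. wt xs \<le> Suc 0} \<longleftrightarrow> xs \<in> {[], [True]}"
    proof (cases xs)
      case (Cons x ys)
      show ?thesis
      proof (cases ys)
        case (Cons y zs)
        have "2 \<le> wt xs" using wt_ge_len[of xs] \<open>xs = x # ys\<close> Cons by simp
        then show ?thesis using \<open>xs = x # ys\<close> Cons by auto
      qed (use Cons in \<open>auto simp: wb_def\<close>)
    qed simp
  qed
  then show ?case by (simp add: numeral_eq_Suc)
next
  case (3 K)
  have d: "Cons True ` {xs. wt xs \<le> Suc K} \<inter> Cons False ` {xs. wt xs \<le> K} = {}" by auto
  have "card {xs. wt xs \<le> Suc (Suc K)} = Suc (card (Cons True ` {xs. wt xs \<le> Suc K}) + card (Cons False ` {xs. wt xs \<le> K}))"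
    unfolding wt_rec
    by (subst card_insert_disjoint) (auto simp: fin_wt card_Un_disjoint[OF _ _ d])
  also have "\<dots> = Suc (card {xs. wt xs \<le> Suc K} + card {xs. wt xs \<le> K})"
    by (simp add: card_image)
  finally show ?case using 3 by (simp add: numeral_eq_Suc)
qed



definition enc2 :: "(bool \<times> bool) list \<Rightarrow> bool list" where
  "enc2 xs = concat (map (\<lambda>(a,c). [a,c]) xs)"

lemma enc2_simps[simp]: "enc2 [] = []" "enc2 ((a,c)#xs) = a # c # enc2 xs"
  by (auto simp: enc2_def)

lemma parse:
  assumes "\<forall>p\<in>set xs. p \<noteq> (True,False)" "\<forall>p\<in>set ys. p \<noteq> (True,False)"
    and "enc2 xs @ [True,False] @ r = enc2 ys @ [True,False] @ r'"
  shows "xs = ys \<and> r = r'"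
  using assms
proof (induction xs arbitrary: ys)
  case Nil
  show ?case
  proof (cases ys)
    case (Cons y ys')
    obtain a c where y: "y = (a,c)" by (cases y)
    have "a = True" "c = False" using Nil.prems(3) Cons y by simp_all
    then show ?thesis using Nil.prems(2) Cons y by simp
  qed (use Nil.prems(3) in simp)
next
  case (Cons p xs)
  obtain a c where p: "p = (a,c)" by (cases p)
  show ?case
  proof (cases ys)
    case Nil
    have "a = True" "c = False" using Cons.prems(3) Nil p by simp_all
    then show ?thesis using Cons.prems(1) p by simp
  next
    case (Cons y ys')
    obtain a' c' where y: "y = (a',c')" by (cases y)
    have e: "a = a'" "c = c'" "enc2 xs @ [True,False] @ r = enc2 ys' @ [True,False] @ r'"
      using Cons.prems(3) Cons p y by simp_all
    have "xs = ys' \<and> r = r'"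
      using Cons.IH[OF _ _ e(3)] Cons.prems(1,2) Cons by simp
    then show ?thesis using e Cons p y by simp
  qed
qed

definition good :: "(nat \<Rightarrow> bool) \<Rightarrow> nat \<Rightarrow> nat \<Rightarrow> bool" where
  "good b n P \<longleftrightarrow> 1 \<le> P \<and> P \<le> n \<and> b P \<and> \<not> b (n + 1 - P) \<and>
     (\<forall>i. 1 \<le> i \<longrightarrow> i + P \<le> n \<longrightarrow> b i \<longrightarrow> b (i + P))"

definition enc :: "(nat \<Rightarrow> bool) \<Rightarrow> nat \<Rightarrow> nat \<Rightarrow> bool list" where
  "enc b n P = (if n + 1 - P < P then
      [False, True] @ enc2 (map (\<lambda>i. (b i, b (i+P))) [1..<n+1-P]) @ [True, False] @ map b [(n+1-P)+1..<P]
    else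
      [True, True] @ enc2 (map (\<lambda>i. (b i, b (i+P))) [1..<P]) @ [True, False] @ map b [2*P+1..<n+1])"

lemma nopair: "good b n P \<Longrightarrow> k + P \<le> n + 1 \<Longrightarrow> \<forall>p\<in>set (map (\<lambda>i. (b i, b (i+P))) [1..<k]). p \<noteq> (True,False)"
  by (auto simp: good_def)

lemma good_case2: "good b n P \<Longrightarrow> \<not> (n + 1 - P < P) \<Longrightarrow> 2 * P \<le> n \<and> b (2*P)"
proof -
  assume g: "good b n P" and c: "\<not> (n + 1 - P < P)"
  have "n + 1 - P \<noteq> P" using g unfolding good_def by auto
  then have "2 * P \<le> n" using c g unfolding good_def by auto
  moreover have "b (P + P)" using g \<open>2 * P \<le> n\<close> unfolding good_def by auto
  ultimately show ?thesis by (simp add: mult_2)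
qed

lemma map_upt_eq: "map f [a..<c] = map g [a..<c] \<Longrightarrow> a \<le> i \<Longrightarrow> i < c \<Longrightarrow> f i = g i"
  by (simp only: map_eq_conv set_upt atLeastLessThan_iff)

lemma enc_inj:
  assumes g: "good b n P" and g': "good b' n' P'" and e: "enc b n P = enc b' n' P'"
  shows "P = P' \<and> n = n' \<and> (\<forall>i. 1 \<le> i \<longrightarrow> i \<le> n \<longrightarrow> b i = b' i)"
proof (cases "n + 1 - P < P")
  case True
  have c': "n' + 1 - P' < P'"
  proof (rule ccontr)
    assume "\<not> ?thesis" then show False using e True unfolding enc_def by simp
  qed
  define q where "q = n + 1 - P"
  define q' where "q' = n' + 1 - P'"
  have e2: "enc2 (map (\<lambda>i. (b i, b (i+P))) [1..<q]) @ [True, False] @ map b [q+1..<P] =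
        enc2 (map (\<lambda>i. (b' i, b' (i+P'))) [1..<q']) @ [True, False] @ map b' [q'+1..<P']"
    using e True c' unfolding enc_def q_def q'_def
    by simp
  have pq: "q + P = n + 1" "q' + P' = n' + 1" "1 \<le> q" "1 \<le> q'" using g g' unfolding good_def q_def q'_def by auto
  from parse[OF nopair[OF g] nopair[OF g'] e2] pq
  have A: "map (\<lambda>i. (b i, b (i+P))) [1..<q] = map (\<lambda>i. (b' i, b' (i+P'))) [1..<q']"
    and B: "map b [q+1..<P] = map b' [q'+1..<P']" by auto
  have qq: "q = q'" using arg_cong[OF A, of length] pq by simp
  have PP: "P = P'" using arg_cong[OF B, of length] qq True c' unfolding q_def q'_def by simp
  have nn: "n = n'" using pq qq PP by simp
  note A1 = map_upt_eq[OF A[unfolded qq[symmetric] PP[symmetric]]]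
  note B1 = map_upt_eq[OF B[unfolded qq[symmetric] PP[symmetric]]]
  have "b i = b' i" if "1 \<le> i" "i \<le> n" for i
  proof -
    consider "i < q" | "i = q" | "q < i \<and> i < P" | "i = P" | "P < i" by linarith
    then show ?thesis
    proof cases
      case 1
      then show ?thesis using A1[of i] that by simp
    next
      case 2
      then show ?thesis using g g' qq PP nn unfolding good_def q_def by simp
    next
      case 3
      then show ?thesis using B1[of i] by simp
    next
      case 4
      then show ?thesis using g g' PP unfolding good_def by simp
    next
      case 5
      then have "i - P < q" "1 \<le> i - P" "i - P + P = i" using that pq by auto
      then show ?thesis using A1[of "i - P"] by simp
    qed
  qed
  then show ?thesis using PP nn by auto
next
  case False
  have c': "\<not> (n' + 1 - P' < P')"
  proof
    assume "n' + 1 - P' < P'" then show False using e False unfolding enc_def by simp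
  qed
  have e2: "enc2 (map (\<lambda>i. (b i, b (i+P))) [1..<P]) @ [True, False] @ map b [2*P+1..<n+1] =
        enc2 (map (\<lambda>i. (b' i, b' (i+P'))) [1..<P']) @ [True, False] @ map b' [2*P'+1..<n'+1]"
    using e False c' unfolding enc_def by simp
  have h: "2 * P \<le> n" "b (2*P)" using good_case2[OF g False] by auto
  have h': "2 * P' \<le> n'" "b' (2*P')" using good_case2[OF g' c'] by auto
  from parse[OF nopair[OF g] nopair[OF g'] e2] h h'
  have A: "map (\<lambda>i. (b i, b (i+P))) [1..<P] = map (\<lambda>i. (b' i, b' (i+P'))) [1..<P']"
    and B: "map b [2*P+1..<n+1] = map b' [2*P'+1..<n'+1]" by auto
  have PP: "P = P'" using arg_cong[OF A, of length] g g' unfolding good_def by (simp, linarith)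
  have nn: "n = n'" using arg_cong[OF B, of length] PP h h' by (simp only: length_map length_upt)
  note A1 = map_upt_eq[OF A[unfolded PP[symmetric]]]
  note B1 = map_upt_eq[OF B[unfolded PP[symmetric] nn[symmetric]]]
  have "b i = b' i" if "1 \<le> i" "i \<le> n" for i
  proof -
    consider "i < P" | "i = P" | "P < i \<and> i < 2*P" | "i = 2*P" | "2*P < i" by linarith
    then show ?thesis
    proof cases
      case 1
      then show ?thesis using A1[of i] that by simp
    next
      case 2
      then show ?thesis using g g' PP unfolding good_def by simp
    next
      case 3
      then have "i - P < P" "1 \<le> i - P" "i - P + P = i" by auto
      then show ?thesis using A1[of "i - P"] by simp
    next
      case 4
      then show ?thesis using h h' PP by simp
    next
      case 5
      then show ?thesis using B1[of i] that by simp
    qed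
  qed
  then show ?thesis using PP nn by auto
qed



lemma wt_map: "wt (map b [a..<c]) = (\<Sum>i\<in>{a..<c}. wb (b i))"
  unfolding wt_def by (simp add: interv_sum_list_conv_sum_set_nat comp_def)

lemma wt_enc2_list: "wt (enc2 (map (\<lambda>i. (b i, b (i+P))) xs)) = sum_list (map (\<lambda>i. wb (b i) + wb (b (i+P))) xs)"
  by (induction xs) auto

lemma wt_enc2: "wt (enc2 (map (\<lambda>i. (b i, b (i+P))) [a..<c])) = (\<Sum>i\<in>{a..<c}. wb (b i)) + (\<Sum>i\<in>{a+P..<c+P}. wb (b i))"
  unfolding wt_enc2_list interv_sum_list_conv_sum_set_nat
  by (simp add: sum.distrib sum.shift_bounds_nat_ivl)

lemma W_card:
  assumes "finite I"
  shows "(\<Sum>i\<in>I. wb (b i)) = card I + card {i\<in>I. \<not> b i}"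
proof -
  have "(\<Sum>i\<in>I. wb (b i)) = (\<Sum>i\<in>I. 1 + (if \<not> b i then 1 else 0))"
    by (rule sum.cong) (auto simp: wb_def)
  also have "\<dots> = (\<Sum>i\<in>I. 1) + (\<Sum>i\<in>I. if \<not> b i then 1 else 0)" by (rule sum.distrib)
  also have "(\<Sum>i\<in>I. 1::nat) = card I" by simp
  also have "(\<Sum>i\<in>I. if \<not> b i then 1 else 0) = card {i\<in>I. \<not> b i}"
    using sum.inter_filter[of I "\<lambda>_. 1::nat" "\<lambda>i. \<not> b i"] assms by simp
  finally show ?thesis .
qed

lemma Wc: "(\<Sum>i\<in>{1..<n+1}. wb (b i)) = n + card {i\<in>{1..<n+1}. \<not> b i}"
  using W_card[of "{1..<n+1}" b] by simp

lemma wt_enc: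
  assumes g: "good b n P"
  shows "wt (enc b n P) = n + card {i\<in>{1..<n+1}. \<not> b i} + 3"
proof (cases "n + 1 - P < P")
  case True
  define q where "q = n + 1 - P"
  have pq: "q + P = n + 1" "1 \<le> q" "q < P" "b P" "\<not> b q" using g True unfolding good_def q_def by auto
  have "wt (enc b n P) = 6 + (\<Sum>i\<in>{1..<q}. wb (b i)) + (\<Sum>i\<in>{1+P..<q+P}. wb (b i)) + (\<Sum>i\<in>{q+1..<P}. wb (b i))"
    using True unfolding enc_def q_def[symmetric] by (simp add: wt_map wt_enc2 wb_def)
  also have "\<dots> = (\<Sum>i\<in>{1..<n+1}. wb (b i)) + 3"
  proof -
    have "(\<Sum>i\<in>{1..<n+1}. wb (b i)) = (\<Sum>i\<in>{1..<q}. wb (b i)) + (\<Sum>i\<in>{q..<P}. wb (b i)) + (\<Sum>i\<in>{P..<n+1}. wb (b i))"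
      using pq by (simp add: sum.atLeastLessThan_concat)
    moreover have "(\<Sum>i\<in>{q..<P}. wb (b i)) = 2 + (\<Sum>i\<in>{q+1..<P}. wb (b i))"
      using pq by (simp add: sum.atLeast_Suc_lessThan wb_def)
    moreover have "(\<Sum>i\<in>{P..<n+1}. wb (b i)) = 1 + (\<Sum>i\<in>{1+P..<q+P}. wb (b i))"
    proof -
      have "{P..<n+1} = insert P {1+P..<q+P}" using pq by auto
      then show ?thesis using pq by (simp add: wb_def)
    qed
    ultimately show ?thesis by simp
  qed
  finally show ?thesis using Wc[of b n] by linarith
next
  case False
  have h: "2 * P \<le> n" "b (2*P)" using good_case2[OF g False] by auto
  have pq: "1 \<le> P" "b P" using g unfolding good_def by auto
  have "wt (enc b n P) = 5 + (\<Sum>i\<in>{1..<P}. wb (b i)) + (\<Sum>i\<in>{1+P..<P+P}. wb (b i)) + (\<Sum>i\<in>{2*P+1..<n+1}. wb (b i))"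
    using False unfolding enc_def by (simp add: wt_map wt_enc2 wb_def)
  also have "\<dots> = (\<Sum>i\<in>{1..<n+1}. wb (b i)) + 3"
  proof -
    have "(\<Sum>i\<in>{1..<n+1}. wb (b i)) = (\<Sum>i\<in>{1..<P}. wb (b i)) + (\<Sum>i\<in>{P..<2*P}. wb (b i)) + (\<Sum>i\<in>{2*P..<n+1}. wb (b i))"
      using pq h by (simp add: sum.atLeastLessThan_concat)
    moreover have "(\<Sum>i\<in>{P..<2*P}. wb (b i)) = 1 + (\<Sum>i\<in>{1+P..<P+P}. wb (b i))"
      using pq by (simp add: sum.atLeast_Suc_lessThan wb_def mult_2)
    moreover have "(\<Sum>i\<in>{2*P..<n+1}. wb (b i)) = 1 + (\<Sum>i\<in>{2*P+1..<n+1}. wb (b i))"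
    proof -
      have "{2*P..<n+1} = insert (2*P) {2*P+1..<n+1}" using h by auto
      then show ?thesis using h by (simp add: wb_def)
    qed
    ultimately show ?thesis by simp
  qed
  finally show ?thesis using Wc[of b n] by linarith
qed



definition GoodP :: "nat set \<Rightarrow> nat set" where
  "GoodP S = {P \<in> pseudo_frobenius S. int P \<le> frobenius S - int (multiplicity_ns S)}"

definition FnS :: "nat set \<Rightarrow> nat" where "FnS S = Max (gaps S)"
definition nS :: "nat set \<Rightarrow> nat" where "nS S = FnS S - multiplicity_ns S - 1"
definition bS :: "nat set \<Rightarrow> nat \<Rightarrow> bool" where "bS S = (\<lambda>i. multiplicity_ns S + i \<in> S)"

lemma ns_facts:
  assumes "numerical_semigroup S"
  shows "0 \<in> S" "\<And>a b. a \<in> S \<Longrightarrow> b \<in> S \<Longrightarrow> a + b \<in> S" "finite (gaps S)"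
  using assms unfolding numerical_semigroup_def gaps_def by auto

lemma mult_facts:
  assumes "numerical_semigroup S"
  shows "multiplicity_ns S \<in> S" "0 < multiplicity_ns S" "\<And>x. 0 < x \<Longrightarrow> x < multiplicity_ns S \<Longrightarrow> x \<notin> S"
proof -
  have "finite (gaps S \<union> {0})" using ns_facts[OF assms] by simp
  then obtain x :: nat where x: "x \<notin> gaps S \<union> {0}" using ex_new_if_finite[OF infinite_UNIV_nat] by blast
  then have ex: "x \<in> S \<and> x \<noteq> 0" unfolding gaps_def by auto
  show "multiplicity_ns S \<in> S" "0 < multiplicity_ns S"
    using LeastI[of "\<lambda>s. s \<in> S \<and> s \<noteq> 0", OF ex] unfolding multiplicity_ns_def by auto
  show "\<And>x. 0 < x \<Longrightarrow> x < multiplicity_ns S \<Longrightarrow> x \<notin> S"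
    using not_less_Least[of _ "\<lambda>s. s \<in> S \<and> s \<noteq> 0"] unfolding multiplicity_ns_def by auto
qed

lemma fin_GoodP: "numerical_semigroup S \<Longrightarrow> finite (GoodP S)"
  using ns_facts(3) unfolding GoodP_def pseudo_frobenius_def
  by (rule finite_subset[rotated]) auto

lemma t2_le:
  assumes ns: "numerical_semigroup S"
  shows "t2 S \<le> int (card (GoodP S))"
proof -
  let ?T = "{h \<in> gaps S. frobenius S - int (multiplicity_ns S) + 1 \<le> int h \<and> int h \<le> frobenius S}"
  have fg: "finite (gaps S)" using ns_facts[OF ns] by simp
  have "pseudo_frobenius S \<subseteq> GoodP S \<union> ?T"
  proof
    fix h assume h: "h \<in> pseudo_frobenius S"
    then have hg: "h \<in> gaps S" unfolding pseudo_frobenius_def by auto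
    then have "gaps S \<noteq> {}" by auto
    then have "frobenius S = int (Max (gaps S))" unfolding frobenius_def by simp
    moreover have "h \<le> Max (gaps S)" using fg hg by simp
    ultimately show "h \<in> GoodP S \<union> ?T" using h hg unfolding GoodP_def by auto
  qed
  then have "card (pseudo_frobenius S) \<le> card (GoodP S \<union> ?T)"
    by (rule card_mono[rotated]) (use fg fin_GoodP[OF ns] in auto)
  also have "\<dots> \<le> card (GoodP S) + card ?T" by (rule card_Un_le)
  finally have "int (card (pseudo_frobenius S)) \<le> int (card (GoodP S)) + int (card ?T)" by linarith
  then show ?thesis unfolding t2_def type_ns_def t1_def by linarith
qed

lemma struct:
  assumes B: "S \<in> B_set g" and P: "P \<in> GoodP S"
  shows "good (bS S) (nS S) P" "nS S + 2 \<le> multiplicity_ns S"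
    "g = multiplicity_ns S + card {i\<in>{1..<nS S+1}. \<not> bS S i}"
    "S = {0, multiplicity_ns S} \<union> {x. multiplicity_ns S < x \<and> x < multiplicity_ns S + nS S + 1 \<and> bS S (x - multiplicity_ns S)}
         \<union> {x. multiplicity_ns S + nS S + 1 < x}"
proof -
  define m where "m = multiplicity_ns S"
  define Fn where "Fn = FnS S"
  define n where "n = nS S"
  define b where "b = bS S"
  have ns: "numerical_semigroup S" and gen: "genus S = g" and F2: "frobenius S < 2 * int m"
    using B unfolding B_set_def m_def by auto
  note nsf = ns_facts[OF ns]
  note mf = mult_facts[OF ns, folded m_def]
  have Pg: "P \<in> gaps S" and PF: "\<And>s. s \<in> S \<Longrightarrow> s \<noteq> 0 \<Longrightarrow> P + s \<in> S"
    and Pl: "int P \<le> frobenius S - int m"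
    using P unfolding GoodP_def pseudo_frobenius_def m_def by auto
  have ne: "gaps S \<noteq> {}" using Pg by auto
  have Fr: "frobenius S = int Fn" using ne unfolding frobenius_def Fn_def FnS_def by simp
  have Fng: "Fn \<in> gaps S" using ne nsf(3) unfolding Fn_def FnS_def by simp
  have Fnmax: "\<And>x. x \<in> gaps S \<Longrightarrow> x \<le> Fn" using nsf(3) unfolding Fn_def FnS_def by simp
  have above: "\<And>x. Fn < x \<Longrightarrow> x \<in> S" using Fnmax unfolding gaps_def by force
  have FnS: "Fn \<notin> S" using Fng unfolding gaps_def by auto
  have P0: "P \<noteq> 0" using Pg nsf(1) unfolding gaps_def by (cases "P = 0") auto
  have Pm: "P + m \<le> Fn" using Pl Fr by simp
  have PmS: "P + m \<in> S" using PF mf by auto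
  then have Pm2: "P + m < Fn" using Pm FnS by (cases "P + m = Fn") auto
  have F2m: "Fn < 2 * m" using F2 Fr by simp
  have n_eq: "n = Fn - m - 1" unfolding n_def nS_def Fn_def m_def ..
  have Fnn: "Fn = m + n + 1" using n_eq Pm2 by simp
  have b_eq: "\<And>i. b i = (m + i \<in> S)" unfolding b_def bS_def m_def by simp
  show "nS S + 2 \<le> multiplicity_ns S" using F2m Fnn unfolding n_def[symmetric] m_def[symmetric] by simp
  have "good b n P"
    unfolding good_def
  proof (intro conjI allI impI)
    show "1 \<le> P" using P0 by simp
    show "P \<le> n" using Pm2 Fnn by simp
    show "b P" using PmS b_eq by (simp add: add.commute)
    show "\<not> b (n + 1 - P)"
    proof
      assume "b (n + 1 - P)"
      then have "Fn - P \<in> S" using b_eq Fnn \<open>P \<le> n\<close> by (simp add: add.commute)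
      moreover have "Fn - P \<noteq> 0" using Pm2 by simp
      ultimately have "P + (Fn - P) \<in> S" using PF by blast
      then show False using FnS Pm2 by simp
    qed
    fix i assume "1 \<le> i" "i + P \<le> n" "b i"
    then have "P + (m + i) \<in> S" using PF b_eq by simp
    then show "b (i + P)" using b_eq by (simp add: ac_simps)
  qed
  then show "good (bS S) (nS S) P" unfolding b_def n_def .
  have gaps_eq: "gaps S = {1..<m} \<union> ((+) m ` {i\<in>{1..<n+1}. \<not> b i}) \<union> {Fn}"
  proof (rule set_eqI)
    fix x
    show "x \<in> gaps S \<longleftrightarrow> x \<in> {1..<m} \<union> ((+) m ` {i\<in>{1..<n+1}. \<not> b i}) \<union> {Fn}"
    proof (cases "x < m")
      case True
      then show ?thesis using mf(3)[of x] nsf(1) Pm2 unfolding gaps_def by (cases "x = 0") auto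
    next
      case False
      show ?thesis
      proof (cases "x = m")
        case True then show ?thesis using mf Pm2 unfolding gaps_def by auto
      next
        case xm: False
        show ?thesis
        proof (cases "x < Fn")
          case True
          have "x \<in> (+) m ` {i\<in>{1..<n+1}. \<not> b i} \<longleftrightarrow> x \<notin> S"
          proof
            assume "x \<in> (+) m ` {i\<in>{1..<n+1}. \<not> b i}" then show "x \<notin> S" using b_eq by auto
          next
            assume "x \<notin> S"
            then have "x - m \<in> {i\<in>{1..<n+1}. \<not> b i}" using b_eq False xm True Fnn by auto
            moreover have "x = m + (x - m)" using False by simp
            ultimately show "x \<in> (+) m ` {i\<in>{1..<n+1}. \<not> b i}" by blast
          qed
          then show ?thesis using False True unfolding gaps_def by auto
        next
          case nlt: False
          then show ?thesis using above FnS Fnn unfolding gaps_def by (cases "x = Fn") auto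
        qed
      qed
    qed
  qed
  have "card (gaps S) = card ({1..<m} \<union> ((+) m ` {i\<in>{1..<n+1}. \<not> b i})) + 1"
    unfolding gaps_eq using Fnn by (subst card_Un_disjoint) auto
  also have "\<dots> = (m - 1) + card {i\<in>{1..<n+1}. \<not> b i} + 1"
    by (subst card_Un_disjoint) (auto simp: card_image)
  finally show "g = multiplicity_ns S + card {i\<in>{1..<nS S+1}. \<not> bS S i}"
    using gen mf(2) unfolding genus_def m_def[symmetric] n_def[symmetric] b_def[symmetric] by simp
  show "S = {0, multiplicity_ns S} \<union> {x. multiplicity_ns S < x \<and> x < multiplicity_ns S + nS S + 1 \<and> bS S (x - multiplicity_ns S)}
         \<union> {x. multiplicity_ns S + nS S + 1 < x}"
    unfolding m_def[symmetric] n_def[symmetric] b_def[symmetric]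
  proof (rule set_eqI)
    fix x
    show "x \<in> S \<longleftrightarrow> x \<in> {0, m} \<union> {x. m < x \<and> x < m + n + 1 \<and> b (x - m)} \<union> {x. m + n + 1 < x}"
      using mf(1) mf(3)[of x] nsf(1) FnS above Fnn b_eq[of "x - m"] Pm2
      by (cases "x < m"; cases "x = m"; cases "x < Fn"; cases "x = Fn") auto
  qed
qed



theorem lemma5p1:
  fixes g :: nat
  shows "(\<Sum>S\<in>B_set g. t2 S) \<le> int (fib (g + 4))"
proof (cases "finite (B_set g)")
  case False
  then show ?thesis by simp
next
  case True
  let ?Sig = "Sigma (B_set g) GoodP"
  define f where "f = (\<lambda>(S,P). enc (bS S) (nS S) P)"
  have ns: "\<And>S. S \<in> B_set g \<Longrightarrow> numerical_semigroup S" unfolding B_set_def by auto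
  have "(\<Sum>S\<in>B_set g. t2 S) \<le> (\<Sum>S\<in>B_set g. int (card (GoodP S)))"
    by (rule sum_mono) (use t2_le ns in auto)
  also have "\<dots> = int (\<Sum>S\<in>B_set g. card (GoodP S))" by simp
  also have "(\<Sum>S\<in>B_set g. card (GoodP S)) = card ?Sig"
  proof -
    have "\<forall>a\<in>B_set g. finite (GoodP a)" using fin_GoodP ns by blast
    from card_SigmaI[OF True this] show ?thesis by (rule sym)
  qed
  also have "card ?Sig \<le> card {xs. wt xs \<le> g + 1}"
  proof (rule card_inj_on_le[OF _ _ fin_wt])
    show "inj_on f ?Sig"
    proof (rule inj_onI)
      fix x y assume x: "x \<in> ?Sig" and y: "y \<in> ?Sig" and e: "f x = f y"
      obtain S P where xd: "x = (S,P)" by (cases x)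
      obtain S' P' where yd: "y = (S',P')" by (cases y)
      have SB: "S \<in> B_set g" "P \<in> GoodP S" using x xd by auto
      have SB': "S' \<in> B_set g" "P' \<in> GoodP S'" using y yd by auto
      note st = struct[OF SB]
      note st' = struct[OF SB']
      have e': "enc (bS S) (nS S) P = enc (bS S') (nS S') P'" using e xd yd unfolding f_def by simp
      have PP: "P = P'" and nn: "nS S = nS S'" and bb: "\<And>i. 1 \<le> i \<Longrightarrow> i \<le> nS S \<Longrightarrow> bS S i = bS S' i"
        using enc_inj[OF st(1) st'(1) e'] by auto
      have cs: "{i\<in>{1..<nS S+1}. \<not> bS S i} = {i\<in>{1..<nS S'+1}. \<not> bS S' i}"
        using bb nn by auto
      have mm: "multiplicity_ns S = multiplicity_ns S'" using st(3) st'(3) cs by simp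
      have mid: "{x. multiplicity_ns S < x \<and> x < multiplicity_ns S + nS S + 1 \<and> bS S (x - multiplicity_ns S)}
          = {x. multiplicity_ns S' < x \<and> x < multiplicity_ns S' + nS S' + 1 \<and> bS S' (x - multiplicity_ns S')}"
      proof (rule set_eqI)
        fix z
        show "z \<in> {x. multiplicity_ns S < x \<and> x < multiplicity_ns S + nS S + 1 \<and> bS S (x - multiplicity_ns S)} \<longleftrightarrow>
          z \<in> {x. multiplicity_ns S' < x \<and> x < multiplicity_ns S' + nS S' + 1 \<and> bS S' (x - multiplicity_ns S')}"
          using bb[of "z - multiplicity_ns S"] mm nn by auto
      qed
      have "S = S'" using st(4) st'(4) mid mm nn by metis
      then show "x = y" using xd yd PP by simp
    qed
    show "f ` ?Sig \<subseteq> {xs. wt xs \<le> g + 1}"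
    proof
      fix z assume "z \<in> f ` ?Sig"
      then obtain S P where SB: "S \<in> B_set g" "P \<in> GoodP S" and z: "z = f (S,P)" by auto
      note st = struct[OF SB]
      have "wt z = nS S + card {i\<in>{1..<nS S+1}. \<not> bS S i} + 3"
        using wt_enc[OF st(1)] z unfolding f_def by simp
      then show "z \<in> {xs. wt xs \<le> g + 1}" using st(2) st(3) by simp
    qed
  qed
  finally have A: "(\<Sum>S\<in>B_set g. t2 S) \<le> int (card {xs. wt xs \<le> g + 1})" by simp
  have eq: "fib (g + 4) = card {xs. wt xs \<le> g + 1} + 1"
  proof -
    have "g + 4 = (g + 1) + 3" by simp
    then show ?thesis using card_wt[of "g + 1"] by metis
  qed
  have "int (fib (g + 4)) = int (card {xs. wt xs \<le> g + 1}) + 1" using eq by simp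
  then show ?thesis using A by linarith
qed


end
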